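(* Let $\Gamma_1,\Gamma_2$ be co-prime integers with $1<\Gamma_1<\Gamma_2$, with Euclidean sequence $\sigma_{-1},\sigma_0,\dots,\sigma_{K+1}$ and numbers $\ddot n_{2,j},\ddot n_{1,j}$ ($1\le j\le K+1$) as defined in the context. Then: If $K=0$: $\ddot n_{2,1}=\Gamma_1-1$ and $\ddot n_{1,1}=\Gamma_2-1$. If $K\ge1$: $\ddot n_{2,K+1}=\Gamma_1-1$, $\ddot n_{1,K+1}=\Gamma_2-1$, and for $1\le j\le K$: $$\ddot n_{2,j}=\begin{cases}\lfloor\Gamma_1/\sigma_1\rfloor & j=1,\\ \lfloor\Gamma_1/\sigma_1\rfloor\lfloor\sigma_1/\sigma_2\rfloor & j=2,\\ \lfloor\sigma_{2p}/\sigma_{2p+1}\rfloor(\ddot n_{2,2p}+1)+\ddot n_{2,2p-1} & j=2p+1,\ p\ge1,\\ \lfloor\sigma_{2p+1}/\sigma_{2p+2}\rfloor\ddot n_{2,2p+1}+\ddot n_{2,2p} & j=2p+2,\ p\ge1,\end{cases}$$ $$\ddot n_{1,j}=\begin{cases}\lfloor\Gamma_2/\Gamma_1\rfloor\lfloor\Gamma_1/\sigma_1\rfloor & j=1,\\ \lfloor\Gamma_2/\Gamma_1\rfloor\lfloor\Gamma_1/\sigma_1\rfloor\lfloor\sigma_1/\sigma_2\rfloor+\lfloor\sigma_1/\sigma_2\rfloor+\lfloor\Gamma_2/\Gamma_1\rfloor & j=2,\\ \lfloor\sigma_{2p}/\sigma_{2p+1}\rfloor\ddot n_{1,2p}+\ddot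 n_{1,2p-1} & j=2p+1,\ p\ge1,\\ \lfloor\sigma_{2p+1}/\sigma_{2p+2}\rfloor(\ddot n_{1,2p+1}+1)+\ddot n_{1,2p} & j=2p+2,\ p\ge1.\end{cases}$$
   Context: $|a|_b$ is the remainder of the integer $a$ modulo the positive integer $b$. Euclidean sequence: $\sigma_{-1}=\Gamma_2$, $\sigma_0=\Gamma_1$, $\sigma_i=|\sigma_{i-2}|_{\sigma_{i-1}}$ for $i\ge1$; $K\ge0$ is the (existing, unique) index with $\sigma_K>1$ and $\sigma_{K+1}=1$. For $1\le n<\Gamma_1$ let $S_{2,n}=\{|t\Gamma_2|_{\Gamma_1}: t=0,1,\dots,n\}$ and let $d_{2,n}$ be the minimum distance between two distinct elements of $S_{2,n}$; for $1\le n<\Gamma_2$ let $S_{1,n}=\{|t\Gamma_1|_{\Gamma_2}: t=0,1,\dots,n\}$ and $d_{1,n}$ the minimum distance between two distinct elements of $S_{1,n}$. For $1\le j\le K+1$ define $\ddot n_{2,j}=\max\{n: 1\le n<\Gamma_1,\ d_{2,n}\ge\sigma_j\}$ and $\ddot n_{1,j}=\max\{n:1\le n<\Gamma_2,\ d_{1,n}\ge\sigma_j\}$. *)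

theory Defs
  imports Main
begin

text \<open>Raw Euclidean sequence: eseq a b 0 = a, eseq a b 1 = b, then remainders.
  With a = Gamma2, b = Gamma1 we get eseq (Suc i) = sigma_i, eseq 0 = sigma_(-1).\<close>
fun eseq :: "nat \<Rightarrow> nat \<Rightarrow> nat \<Rightarrow> nat" where
  "eseq a b 0 = a"
| "eseq a b (Suc 0) = b"
| "eseq a b (Suc (Suc n)) = eseq a b n mod eseq a b (Suc n)"

definition sigma :: "nat \<Rightarrow> nat \<Rightarrow> nat \<Rightarrow> nat" where
  "sigma G1 G2 i = eseq G2 G1 (Suc i)"

definition resid_set :: "nat \<Rightarrow> nat \<Rightarrow> nat \<Rightarrow> nat set" where
  "resid_set a m n = {(t * a) mod m | t. t \<le> n}"

definition mindist :: "nat set \<Rightarrow> nat" where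
  "mindist S = Min {nat \<bar>int x - int y\<bar> | x y. x \<in> S \<and> y \<in> S \<and> x \<noteq> y}"

definition d2 :: "nat \<Rightarrow> nat \<Rightarrow> nat \<Rightarrow> nat" where
  "d2 G1 G2 n = mindist (resid_set G2 G1 n)"

definition d1 :: "nat \<Rightarrow> nat \<Rightarrow> nat \<Rightarrow> nat" where
  "d1 G1 G2 n = mindist (resid_set G1 G2 n)"

definition nn2 :: "nat \<Rightarrow> nat \<Rightarrow> nat \<Rightarrow> nat" where
  "nn2 G1 G2 j = Max {n. 1 \<le> n \<and> n < G1 \<and> d2 G1 G2 n \<ge> sigma G1 G2 j}"

definition nn1 :: "nat \<Rightarrow> nat \<Rightarrow> nat \<Rightarrow> nat" where
  "nn1 G1 G2 j = Max {n. 1 \<le> n \<and> n < G2 \<and> d1 G1 G2 n \<ge> sigma G1 G2 j}"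

end

theory Submission
  imports Defs
begin

fun Qs :: "nat \<Rightarrow> nat \<Rightarrow> nat \<Rightarrow> nat" where
  "Qs m a 0 = 0"
| "Qs m a (Suc 0) = 1"
| "Qs m a (Suc (Suc n)) = Qs m a n + (eseq m a n div eseq m a (Suc n)) * Qs m a (Suc n)"

definition Ys :: "nat \<Rightarrow> nat \<Rightarrow> nat \<Rightarrow> int" where
  "Ys m a n = (if even n then - int (eseq m a n) else int (eseq m a n))"

lemma eseq_split: "eseq m a n = (eseq m a n div eseq m a (Suc n)) * eseq m a (Suc n) + eseq m a (Suc (Suc n))"
  by simp

lemma Ys_rec: "Ys m a (Suc (Suc n)) = Ys m a n + int (eseq m a n div eseq m a (Suc n)) * Ys m a (Suc n)"
proof -
  have h: "int (eseq m a n) = int (eseq m a n div eseq m a (Suc n)) * int (eseq m a (Suc n)) + int (eseq m a (Suc (Suc n)))"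
    using eseq_split[of m a n] by (metis of_nat_add of_nat_mult)
  show ?thesis unfolding Ys_def using h by (auto simp: algebra_simps)
qed

lemma QY_both: "(\<exists>t. Ys m a n = int (Qs m a n) * int a + int m * t) \<and>
  (\<exists>t. Ys m a (Suc n) = int (Qs m a (Suc n)) * int a + int m * t)"
proof (induction n)
  case 0
  have "Ys m a 0 = int (Qs m a 0) * int a + int m * (-1)" by (simp add: Ys_def)
  moreover have "Ys m a (Suc 0) = int (Qs m a (Suc 0)) * int a + int m * 0" by (simp add: Ys_def)
  ultimately show ?case by blast
next
  case (Suc n)
  then obtain t1 t2 where t1: "Ys m a n = int (Qs m a n) * int a + int m * t1"
    and t2: "Ys m a (Suc n) = int (Qs m a (Suc n)) * int a + int m * t2" by blast
  define c where "c = eseq m a n div eseq m a (Suc n)"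
  have "Ys m a (Suc (Suc n)) = int (Qs m a (Suc (Suc n))) * int a + int m * (t1 + int c * t2)"
    unfolding Ys_rec c_def[symmetric] using t1 t2 by (simp add: c_def algebra_simps)
  then show ?case using t2 by blast
qed

lemma QY: "\<exists>t. Ys m a n = int (Qs m a n) * int a + int m * t"
  using QY_both by blast

lemma det_both: "int (Qs m a n) * Ys m a (Suc n) - int (Qs m a (Suc n)) * Ys m a n = (if even n then int m else - int m)"
proof (induction n)
  case 0
  then show ?case by (simp add: Ys_def)
next
  case (Suc n)
  define c where "c = eseq m a n div eseq m a (Suc n)"
  have "int (Qs m a (Suc n)) * Ys m a (Suc (Suc n)) - int (Qs m a (Suc (Suc n))) * Ys m a (Suc n)
     = - (int (Qs m a n) * Ys m a (Suc n) - int (Qs m a (Suc n)) * Ys m a n)"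
    unfolding Ys_rec c_def[symmetric] by (simp add: c_def algebra_simps)
  then show ?case using Suc by simp
qed

lemma Q_inv: "Qs m a (Suc n) * eseq m a n + Qs m a n * eseq m a (Suc n) = m"
proof (induction n)
  case 0 then show ?case by simp
next
  case (Suc n)
  define c where "c = eseq m a n div eseq m a (Suc n)"
  have e: "eseq m a n = c * eseq m a (Suc n) + eseq m a (Suc (Suc n))"
    using eseq_split c_def by simp
  have q: "Qs m a (Suc (Suc n)) = Qs m a n + c * Qs m a (Suc n)" by (simp add: c_def)
  have "Qs m a (Suc (Suc n)) * eseq m a (Suc n) + Qs m a (Suc n) * eseq m a (Suc (Suc n))
      = Qs m a n * eseq m a (Suc n) + Qs m a (Suc n) * (c * eseq m a (Suc n) + eseq m a (Suc (Suc n)))"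
    unfolding q by (simp only: algebra_simps)
  also have "\<dots> = Qs m a n * eseq m a (Suc n) + Qs m a (Suc n) * eseq m a n" using e by metis
  also have "\<dots> = m" using Suc by (simp only: algebra_simps)
  finally show ?case .
qed

lemma Q_odd_pos: "1 \<le> Qs m a (2 * p + 1)"
proof (induction p)
  case 0 then show ?case by simp
next
  case (Suc p)
  have "Qs m a (2 * Suc p + 1) = Qs m a (Suc (Suc (2*p+1)))" by simp
  also have "\<dots> \<ge> Qs m a (2*p+1)" by simp
  finally show ?case using Suc by simp
qed

lemma eseq_dec: assumes "a < m" "0 < eseq m a k" shows "eseq m a (Suc k) < eseq m a k"
proof (cases k)
  case 0 then show ?thesis using assms by simp
next
  case (Suc j) then show ?thesis using assms by simp
qed

lemma eseq_anti: assumes "a < m" "\<forall>i\<le>N. 0 < eseq m a i" "i \<le> j" "j \<le> N"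
  shows "eseq m a j \<le> eseq m a i"
  using assms(3,4)
proof (induction j)
  case 0 then show ?case by simp
next
  case (Suc j)
  show ?case
  proof (cases "i = Suc j")
    case True then show ?thesis by simp
  next
    case False
    then have "i \<le> j" using Suc by simp
    then have "eseq m a j \<le> eseq m a i" using Suc by simp
    moreover have "eseq m a (Suc j) < eseq m a j" using eseq_dec[OF assms(1)] assms(2) Suc by simp
    ultimately show ?thesis by simp
  qed
qed

lemma abs_ge_lemma: fixes al y0 :: int assumes "\<bar>al\<bar> \<ge> 1" shows "\<bar>al * y0\<bar> \<ge> \<bar>y0\<bar>"
proof -
  have "\<bar>al\<bar> * \<bar>y0\<bar> \<ge> 1 * \<bar>y0\<bar>" using assms by (intro mult_right_mono) simp_all
  then show ?thesis by (simp add: abs_mult)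
qed

lemma sign_arg: fixes al be q0 q1 k y y0 y1 E :: int
  assumes "0 \<le> q0" "k < q1" "1 \<le> k" "k = al*q0 + be*q1" "y = al*y0 + be*y1" "\<bar>y0\<bar> = E"
    "(y0 \<le> 0 \<and> 0 \<le> y1) \<or> (0 \<le> y0 \<and> y1 \<le> 0)" "\<bar>y\<bar> < E"
  shows False
proof -
  consider "be = 0" | "be \<ge> 1" | "be \<le> -1" by linarith
  then show False
  proof cases
    case 1
    then have k: "k = al * q0" using assms by simp
    have "al \<ge> 1"
    proof (rule ccontr)
      assume "\<not> al \<ge> 1" then have "al \<le> 0" by simp
      then have "al * q0 \<le> 0" using assms(1) by (simp add: mult_nonpos_nonneg)
      then show False using k assms(3) by simp
    qed
    then have "\<bar>al * y0\<bar> \<ge> \<bar>y0\<bar>" by (intro abs_ge_lemma) simp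
    then show False using assms 1 by simp
  next
    case 2
    have "be * q1 \<ge> 1 * q1" using 2 assms by (intro mult_right_mono) simp_all
    then have aq: "al * q0 < 0" using assms by linarith
    have "al \<le> -1"
    proof (rule ccontr)
      assume "\<not> al \<le> -1" then have "al \<ge> 0" by simp
      then have "al * q0 \<ge> 0" using assms(1) by simp
      then show False using aq by simp
    qed
    have a1: "\<bar>al * y0\<bar> \<ge> \<bar>y0\<bar>" using \<open>al \<le> -1\<close> by (intro abs_ge_lemma) simp
    show False using assms(7)
    proof
      assume h: "y0 \<le> 0 \<and> 0 \<le> y1"
      have "al * y0 \<ge> 0" using h \<open>al \<le> -1\<close> by (simp add: mult_nonpos_nonpos)
      moreover have "be * y1 \<ge> 0" using h 2 by simp
      ultimately show False using a1 assms(5,6,8) by linarith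
    next
      assume h: "0 \<le> y0 \<and> y1 \<le> 0"
      have "al * y0 \<le> 0" using h \<open>al \<le> -1\<close> by (simp add: mult_nonpos_nonneg)
      moreover have "be * y1 \<le> 0" using h 2 by (simp add: mult_nonneg_nonpos)
      ultimately show False using a1 assms(5,6,8) by linarith
    qed
  next
    case 3
    have "be * q1 \<le> (-1) * q1" using 3 assms by (intro mult_right_mono) simp_all
    then have aq: "al * q0 > 0" using assms by linarith
    have "al \<ge> 1"
    proof (rule ccontr)
      assume "\<not> al \<ge> 1" then have "al \<le> 0" by simp
      then have "al * q0 \<le> 0" using assms(1) by (simp add: mult_nonpos_nonneg)
      then show False using aq by simp
    qed
    have a1: "\<bar>al * y0\<bar> \<ge> \<bar>y0\<bar>" using \<open>al \<ge> 1\<close> by (intro abs_ge_lemma) simp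
    show False using assms(7)
    proof
      assume h: "y0 \<le> 0 \<and> 0 \<le> y1"
      have "al * y0 \<le> 0" using h \<open>al \<ge> 1\<close> by (simp add: mult_nonneg_nonpos)
      moreover have "be * y1 \<le> 0" using h 3 by (simp add: mult_nonpos_nonneg)
      ultimately show False using a1 assms(5,6,8) by linarith
    next
      assume h: "0 \<le> y0 \<and> y1 \<le> 0"
      have "al * y0 \<ge> 0" using h \<open>al \<ge> 1\<close> by simp
      moreover have "be * y1 \<ge> 0" using h 3 by (simp add: mult_nonpos_nonpos)
      ultimately show False using a1 assms(5,6,8) by linarith
    qed
  qed
qed

lemma CL: fixes m a n k :: nat and y t2 :: int
  assumes m0: "0 < m" and k1: "1 \<le> k" and kq: "k < Qs m a (Suc n)"
   and ty: "y = int k * int a + int m * t2" and yb: "\<bar>y\<bar> < int (eseq m a n)"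
  shows False
proof -
  obtain t0 where t0: "Ys m a n = int (Qs m a n) * int a + int m * t0" using QY by blast
  obtain t1 where t1: "Ys m a (Suc n) = int (Qs m a (Suc n)) * int a + int m * t1" using QY by blast
  define q0 where "q0 = int (Qs m a n)"
  define q1 where "q1 = int (Qs m a (Suc n))"
  define ep where "ep = q0*t1 - q1*t0"
  have D: "q0 * Ys m a (Suc n) - q1 * Ys m a n = (if even n then int m else - int m)"
    using det_both[of m a n] q0_def q1_def by simp
  have "q0 * Ys m a (Suc n) - q1 * Ys m a n = int m * ep"
    unfolding t0 t1 ep_def q0_def[symmetric] q1_def[symmetric] by algebra
  then have "int m * ep = int m * 1 \<or> int m * ep = int m * (-1)" using D by (auto split: if_splits)
  moreover have "int m \<noteq> 0" using m0 by simp
  ultimately have "ep = 1 \<or> ep = -1" by (metis mult_cancel_left)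
  then have ee: "ep * ep = 1" by auto
  define al where "al = ep * (int k * t1 - q1 * t2)"
  define be where "be = ep * (q0 * t2 - int k * t0)"
  have "al*q0 + be*q1 = (ep*ep) * int k" unfolding al_def be_def ep_def by algebra
  then have hk: "int k = al*q0 + be*q1" using ee by simp
  have "al * Ys m a n + be * Ys m a (Suc n) = (ep*ep) * y"
    unfolding t0 t1 ty al_def be_def ep_def q0_def[symmetric] q1_def[symmetric] by algebra
  then have hy: "y = al * Ys m a n + be * Ys m a (Suc n)" using ee by simp
  have sg: "(Ys m a n \<le> 0 \<and> 0 \<le> Ys m a (Suc n)) \<or> (0 \<le> Ys m a n \<and> Ys m a (Suc n) \<le> 0)"
    by (simp add: Ys_def)
  have ab: "\<bar>Ys m a n\<bar> = int (eseq m a n)" by (simp add: Ys_def)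
  show False
    using sign_arg[of q0 "int k" q1 al be y "Ys m a n" "Ys m a (Suc n)" "int (eseq m a n)"]
      hk hy sg ab yb k1 kq q0_def q1_def by simp
qed

lemma CL2: fixes m a n k :: nat
  assumes m0: "0 < m" and k1: "1 \<le> k" and kq: "k < Qs m a (Suc n)"
  shows "eseq m a n \<le> k * a mod m \<and> eseq m a n + k * a mod m \<le> m"
proof -
  define r where "r = k * a mod m"
  have rm: "r < m" using m0 r_def by simp
  have "int (k*a) = int (k*a div m) * int m + int r" unfolding r_def
    by (metis div_mult_mod_eq of_nat_add of_nat_mult)
  then have e1: "int r = int k * int a + int m * (- int (k*a div m))" by (simp add: algebra_simps)
  have A: "eseq m a n \<le> r"
  proof (rule ccontr)
    assume "\<not> eseq m a n \<le> r"
    then show False using CL[OF m0 k1 kq e1] by simp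
  qed
  have B: "eseq m a n + r \<le> m"
  proof (rule ccontr)
    assume h: "\<not> eseq m a n + r \<le> m"
    have e2: "int r - int m = int k * int a + int m * (- int (k*a div m) - 1)" using e1 by (simp add: algebra_simps)
    have "\<bar>int r - int m\<bar> < int (eseq m a n)" using h rm by simp
    then show False using CL[OF m0 k1 kq e2] by simp
  qed
  show ?thesis using A B r_def by simp
qed


definition NN :: "nat \<Rightarrow> nat \<Rightarrow> nat \<Rightarrow> nat" where
  "NN m a s = Max {n. 1 \<le> n \<and> n < m \<and> s \<le> mindist (resid_set a m n)}"

definition DS :: "nat set \<Rightarrow> nat set" where
  "DS S = {nat \<bar>int x - int y\<bar> | x y. x \<in> S \<and> y \<in> S \<and> x \<noteq> y}"

lemma mindist_DS: "mindist S = Min (DS S)" unfolding mindist_def DS_def by simp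

lemma resid_lt: "0 < m \<Longrightarrow> x \<in> resid_set a m n \<Longrightarrow> x < m"
  unfolding resid_set_def by auto

lemma DS_fin: assumes "0 < m" shows "finite (DS (resid_set a m n))"
proof -
  have "DS (resid_set a m n) \<subseteq> {..m}"
  proof
    fix d assume "d \<in> DS (resid_set a m n)"
    then obtain x y where "x \<in> resid_set a m n" "y \<in> resid_set a m n" "d = nat \<bar>int x - int y\<bar>"
      unfolding DS_def by blast
    then have "x < m" "y < m" "d = nat \<bar>int x - int y\<bar>" using resid_lt[OF assms] by auto
    then show "d \<in> {..m}" by auto
  qed
  then show ?thesis using finite_subset by blast
qed

lemma resid_mem: "t \<le> n \<Longrightarrow> t * a mod m \<in> resid_set a m n"
  unfolding resid_set_def by blast

lemma resid_mono: "n \<le> n' \<Longrightarrow> resid_set a m n \<subseteq> resid_set a m n'"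
  unfolding resid_set_def by auto

lemma md_le: assumes "0 < m" "x \<in> resid_set a m n" "y \<in> resid_set a m n" "x \<noteq> y"
  shows "mindist (resid_set a m n) \<le> nat \<bar>int x - int y\<bar>"
  unfolding mindist_DS using assms DS_fin[OF assms(1)] by (intro Min_le) (auto simp: DS_def)

lemma DS_ne: assumes "0 < a" "a < m" "1 \<le> n" shows "DS (resid_set a m n) \<noteq> {}"
proof -
  have "0 * a mod m \<in> resid_set a m n" "1 * a mod m \<in> resid_set a m n"
    using assms resid_mem[of 0 n a m] resid_mem[of 1 n a m] by auto
  moreover have "1 * a mod m \<noteq> 0 * a mod m" using assms by simp
  ultimately show ?thesis unfolding DS_def by blast
qed

lemma pair_ge: fixes m a n s t1 t2 :: nat
  assumes m0: "0 < m" and t12: "t1 < t2" "t2 \<le> n"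
    and hA: "\<forall>k. 1 \<le> k \<and> k \<le> n \<longrightarrow> s \<le> k * a mod m"
    and hB: "\<forall>k. 1 \<le> k \<and> k < n \<longrightarrow> s \<le> m - k * a mod m"
    and xy: "t1 * a mod m \<noteq> t2 * a mod m"
  shows "s \<le> nat \<bar>int (t1 * a mod m) - int (t2 * a mod m)\<bar>"
proof -
  define k where "k = t2 - t1"
  define x where "x = t1 * a mod m"
  define rk where "rk = k * a mod m"
  have xm: "x < m" using m0 x_def by simp
  have rkm: "rk < m" using m0 rk_def by simp
  have "t2 * a = t1 * a + k * a" using t12 k_def by (simp add: algebra_simps)
  then have y: "t2 * a mod m = (x + rk) mod m" unfolding x_def rk_def by (simp add: mod_add_eq)
  have k1: "1 \<le> k" "k \<le> n" using t12 k_def by auto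
  show ?thesis
  proof (cases "x + rk < m")
    case True
    then have "t2 * a mod m = x + rk" using y by simp
    then have "nat \<bar>int (t1 * a mod m) - int (t2 * a mod m)\<bar> = rk" using x_def by simp
    moreover have "s \<le> rk" using hA k1 rk_def by simp
    ultimately show ?thesis by simp
  next
    case False
    then have "(x + rk) mod m = x + rk - m"
      using xm rkm by (simp add: mod_if le_mod_geq)
    then have "t2 * a mod m = x + rk - m" using y by simp
    then have "nat \<bar>int (t1 * a mod m) - int (t2 * a mod m)\<bar> = m - rk" using x_def False rkm by auto
    moreover have "t1 \<noteq> 0"
    proof
      assume "t1 = 0" then have "x = 0" using x_def by simp
      then show False using False rkm by simp
    qed
    then have "k < n" using k_def t12 by simp
    then have "s \<le> m - rk" using hB k1 rk_def by simp
    ultimately show ?thesis by simp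
  qed
qed

lemma md_ge: fixes m a n s :: nat
  assumes a0: "0 < a" and am: "a < m" and n1: "1 \<le> n"
    and hA: "\<forall>k. 1 \<le> k \<and> k \<le> n \<longrightarrow> s \<le> k * a mod m"
    and hB: "\<forall>k. 1 \<le> k \<and> k < n \<longrightarrow> s \<le> m - k * a mod m"
  shows "s \<le> mindist (resid_set a m n)"
proof -
  have m0: "0 < m" using a0 am by simp
  have "\<forall>d \<in> DS (resid_set a m n). s \<le> d"
  proof
    fix d assume "d \<in> DS (resid_set a m n)"
    then obtain t1 t2 where t: "t1 \<le> n" "t2 \<le> n" "t1 * a mod m \<noteq> t2 * a mod m"
      and d: "d = nat \<bar>int (t1 * a mod m) - int (t2 * a mod m)\<bar>"
      unfolding DS_def resid_set_def by blast
    have "t1 < t2 \<or> t2 < t1" using t(3) by (metis linorder_neqE_nat)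
    then show "s \<le> d"
    proof
      assume "t1 < t2" then show ?thesis using pair_ge[OF m0 _ t(2) hA hB t(3)] d by simp
    next
      assume "t2 < t1"
      then have "s \<le> nat \<bar>int (t2 * a mod m) - int (t1 * a mod m)\<bar>"
        using pair_ge[OF m0 _ t(1) hA hB] t(3) by simp
      then show ?thesis using d by simp
    qed
  qed
  then show ?thesis unfolding mindist_DS using DS_fin[OF m0] DS_ne[OF a0 am n1]
    by (simp add: Min_ge_iff)
qed

lemma md_ge1: fixes m a n :: nat
  assumes a0: "0 < a" and am: "a < m" and n1: "1 \<le> n"
  shows "1 \<le> mindist (resid_set a m n)"
proof -
  have m0: "0 < m" using a0 am by simp
  have "\<forall>d \<in> DS (resid_set a m n). 1 \<le> d" unfolding DS_def by auto
  then show ?thesis unfolding mindist_DS using DS_fin[OF m0] DS_ne[OF a0 am n1]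
    by (simp add: Min_ge_iff)
qed

lemma NN_eq: fixes m a s k0 :: nat
  assumes "1 \<le> k0" "k0 < m" "s \<le> mindist (resid_set a m k0)"
    "\<forall>n'. k0 < n' \<and> n' < m \<longrightarrow> mindist (resid_set a m n') < s"
  shows "NN m a s = k0"
  unfolding NN_def
proof (rule Max_eqI)
  show "finite {n. 1 \<le> n \<and> n < m \<and> s \<le> mindist (resid_set a m n)}"
    by (rule finite_subset[of _ "{..<m}"]) auto
  show "k0 \<in> {n. 1 \<le> n \<and> n < m \<and> s \<le> mindist (resid_set a m n)}" using assms by simp
  fix y assume "y \<in> {n. 1 \<le> n \<and> n < m \<and> s \<le> mindist (resid_set a m n)}"
  then have "y < m" "s \<le> mindist (resid_set a m y)" by auto
  then show "y \<le> k0" using assms(4) by (metis leD linorder_le_less_linear)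
qed

lemma gen_last: fixes m a s :: nat
  assumes a0: "0 < a" and am: "a < m" and s1: "s \<le> 1"
  shows "NN m a s = m - 1"
proof (rule NN_eq)
  show "1 \<le> m - 1" "m - 1 < m" using a0 am by auto
  have "1 \<le> m - 1" using a0 am by auto
  then have "1 \<le> mindist (resid_set a m (m - 1))" by (rule md_ge1[OF a0 am])
  then show "s \<le> mindist (resid_set a m (m - 1))" using s1 by simp
  show "\<forall>n'. m - 1 < n' \<and> n' < m \<longrightarrow> mindist (resid_set a m n') < s" by auto
qed


lemma Q_pos: assumes am: "a < m" and pos: "\<forall>i\<le>N. 0 < eseq m a i" shows "i \<le> N \<Longrightarrow> 1 \<le> Qs m a (Suc i)"
proof (induction i)
  case 0 then show ?case by simp
next
  case (Suc i)
  have "eseq m a (Suc i) \<le> eseq m a i" using eseq_anti[OF am pos, of i "Suc i"] Suc by simp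
  moreover have "0 < eseq m a (Suc i)" using pos Suc by simp
  ultimately have c: "1 \<le> eseq m a i div eseq m a (Suc i)" by (simp add: div_greater_zero_iff Suc_le_eq)
  have "Qs m a (Suc i) \<le> (eseq m a i div eseq m a (Suc i)) * Qs m a (Suc i)"
    using c by simp
  moreover have "Qs m a (Suc (Suc i)) = Qs m a i + (eseq m a i div eseq m a (Suc i)) * Qs m a (Suc i)" by simp
  ultimately have "Qs m a (Suc i) \<le> Qs m a (Suc (Suc i))" by linarith
  then show ?case using Suc by simp
qed

lemma res_even: assumes "even n" "eseq m a (Suc n) < m"
  shows "Qs m a (Suc n) * a mod m = eseq m a (Suc n)"
proof -
  obtain t where t: "Ys m a (Suc n) = int (Qs m a (Suc n)) * int a + int m * t" using QY by blast
  have "Ys m a (Suc n) = int (eseq m a (Suc n))" using assms(1) by (simp add: Ys_def)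
  then have "int (Qs m a (Suc n) * a) = int (eseq m a (Suc n)) + int m * (- t)" using t by simp
  then have "int (Qs m a (Suc n) * a) mod int m = (int (eseq m a (Suc n)) + int m * (- t)) mod int m" by (simp only:)
  also have "\<dots> = (int (eseq m a (Suc n))) mod int m" by (rule mod_mult_self2)
  also have "\<dots> = int (eseq m a (Suc n))" using assms(2) by (simp add: mod_pos_pos_trivial)
  finally have "int (Qs m a (Suc n) * a mod m) = int (eseq m a (Suc n))" by (simp add: of_nat_mod)
  then show ?thesis by simp
qed

lemma res_odd: assumes "odd n" "0 < eseq m a (Suc n)" "eseq m a (Suc n) < m"
  shows "Qs m a (Suc n) * a mod m = m - eseq m a (Suc n)"
proof -
  obtain t where t: "Ys m a (Suc n) = int (Qs m a (Suc n)) * int a + int m * t" using QY by blast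
  have "Ys m a (Suc n) = - int (eseq m a (Suc n))" using assms(1) by (simp add: Ys_def)
  then have "int (Qs m a (Suc n) * a) = - int (eseq m a (Suc n)) + int m * (- t)" using t by simp
  then have "int (Qs m a (Suc n) * a) mod int m = (- int (eseq m a (Suc n)) + int m * (- t)) mod int m" by (simp only:)
  also have "\<dots> = (- int (eseq m a (Suc n))) mod int m" by (rule mod_mult_self2)
  also have "\<dots> = int m - int (eseq m a (Suc n))" using assms(2,3)
    by (simp add: zmod_zminus1_eq_if mod_pos_pos_trivial)
  finally have "int (Qs m a (Suc n) * a mod m) = int m - int (eseq m a (Suc n))" by (simp add: of_nat_mod)
  then show ?thesis using assms(3) by simp
qed

lemma gen_main: fixes m a n :: nat
  assumes a0: "0 < a" and am: "a < m" and n1: "1 \<le> n" and en: "1 < eseq m a n"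
    and pos: "\<forall>i \<le> Suc n. 0 < eseq m a i"
  shows "NN m a (eseq m a n) = (if odd n then Qs m a (Suc n) else Qs m a (Suc n) - 1)"
proof -
  have m0: "0 < m" using a0 am by simp
  define e1 where "e1 = eseq m a (Suc n)"
  define Q where "Q = Qs m a (Suc n)"
  have e1p: "0 < e1" using pos e1_def by simp
  have e1n: "e1 < eseq m a n" using eseq_dec[OF am, of n] en e1_def by simp
  have e1a: "e1 \<le> a" using eseq_anti[OF am pos, of 1 "Suc n"] n1 e1_def by simp
  have e1m: "e1 < m" using e1a am by simp
  have inv: "Q * eseq m a n + Qs m a n * e1 = m" using Q_inv[of m a n] Q_def e1_def by simp
  have Q1: "1 \<le> Q" using Q_pos[OF am pos, of n] Q_def by simp
  have Qn1: "1 \<le> Qs m a n" using Q_pos[OF am pos, of "n - 1"] n1 by simp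
  have "Q * 2 \<le> Q * eseq m a n" using en by simp
  then have Qm: "Q < m" using inv Q1 by linarith
  have sumle: "eseq m a n + e1 \<le> m"
  proof -
    have "eseq m a n \<le> Q * eseq m a n" using Q1 by simp
    moreover have "e1 \<le> Qs m a n * e1" using Qn1 by simp
    ultimately show ?thesis using inv by linarith
  qed
  have cl: "\<And>k. 1 \<le> k \<Longrightarrow> k < Q \<Longrightarrow> eseq m a n \<le> k * a mod m \<and> eseq m a n + k * a mod m \<le> m"
    using CL2[OF m0] Q_def by blast
  show ?thesis
  proof (cases "odd n")
    case True
    have rQ: "Q * a mod m = m - e1" using res_odd[OF True] e1p e1m Q_def e1_def by simp
    have "NN m a (eseq m a n) = Q"
    proof (rule NN_eq)
      show "1 \<le> Q" "Q < m" using Q1 Qm by auto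
      show "eseq m a n \<le> mindist (resid_set a m Q)"
      proof (rule md_ge[OF a0 am Q1])
        show "\<forall>k. 1 \<le> k \<and> k \<le> Q \<longrightarrow> eseq m a n \<le> k * a mod m"
        proof (intro allI impI)
          fix k assume k: "1 \<le> k \<and> k \<le> Q"
          show "eseq m a n \<le> k * a mod m"
          proof (cases "k = Q")
            case True then show ?thesis using rQ sumle by simp
          next
            case False then show ?thesis using cl k by simp
          qed
        qed
        show "\<forall>k. 1 \<le> k \<and> k < Q \<longrightarrow> eseq m a n \<le> m - k * a mod m"
          using cl by fastforce
      qed
      show "\<forall>n'. Q < n' \<and> n' < m \<longrightarrow> mindist (resid_set a m n') < eseq m a n"
      proof (intro allI impI)
        fix n' assume n': "Q < n' \<and> n' < m"
        have x: "1 * a mod m \<in> resid_set a m n'" using n' Q1 by (intro resid_mem) simp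
        have y: "Suc Q * a mod m \<in> resid_set a m n'" using n' by (intro resid_mem) simp
        have "Suc Q * a mod m = (Q * a + a) mod m" by (simp add: algebra_simps)
        also have "\<dots> = (Q * a mod m + a) mod m" by (simp add: mod_add_left_eq)
        also have "\<dots> = (m + (a - e1)) mod m" using rQ e1a e1m by simp
        also have "\<dots> = a - e1" using am by simp
        finally have yv: "Suc Q * a mod m = a - e1" .
        have xv: "1 * a mod m = a" using am by simp
        have "mindist (resid_set a m n') \<le> nat \<bar>int (1 * a mod m) - int (Suc Q * a mod m)\<bar>"
          using md_le[OF m0 x y] xv yv e1p e1a by simp
        also have "\<dots> = e1" using xv yv e1a by simp
        finally show "mindist (resid_set a m n') < eseq m a n" using e1n by simp
      qed
    qed
    then show ?thesis using True Q_def by simp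
  next
    case False
    have ev: "even n" using False by simp
    have rQ: "Q * a mod m = e1" using res_even[OF ev] e1m Q_def e1_def by simp
    have n2: "2 \<le> n" using ev n1 by presburger
    have Qnm1: "1 \<le> Qs m a (n - 1)" using Q_pos[OF am pos, of "n - 2"] n2
      by (simp add: Suc_diff_Suc numeral_2_eq_2)
    have "eseq m a n \<le> eseq m a (n - 1)" using eseq_anti[OF am pos, of "n-1" n] by simp
    then have c1: "1 \<le> eseq m a (n - 1) div eseq m a n" using en by (simp add: div_greater_zero_iff Suc_le_eq)
    have "Q = Qs m a (n - 1) + (eseq m a (n - 1) div eseq m a n) * Qs m a n"
      unfolding Q_def using n2 by (cases n rule: nat.exhaust; cases "n - 1") auto
    moreover have "Qs m a n \<le> (eseq m a (n - 1) div eseq m a n) * Qs m a n" using c1 by simp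
    ultimately have Q2: "2 \<le> Q" using Qnm1 Qn1 by linarith
    have "NN m a (eseq m a n) = Q - 1"
    proof (rule NN_eq)
      show "1 \<le> Q - 1" "Q - 1 < m" using Q2 Qm by auto
      have Q11: "1 \<le> Q - 1" using Q2 by simp
      show "eseq m a n \<le> mindist (resid_set a m (Q - 1))"
      proof (rule md_ge[OF a0 am Q11])
        show "\<forall>k. 1 \<le> k \<and> k \<le> Q - 1 \<longrightarrow> eseq m a n \<le> k * a mod m"
          using cl Q2 by fastforce
        show "\<forall>k. 1 \<le> k \<and> k < Q - 1 \<longrightarrow> eseq m a n \<le> m - k * a mod m"
          using cl by fastforce
      qed
      show "\<forall>n'. Q - 1 < n' \<and> n' < m \<longrightarrow> mindist (resid_set a m n') < eseq m a n"
      proof (intro allI impI)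
        fix n' assume n': "Q - 1 < n' \<and> n' < m"
        have x: "0 * a mod m \<in> resid_set a m n'" by (intro resid_mem) simp
        have y: "Q * a mod m \<in> resid_set a m n'" using n' Q2 by (intro resid_mem) auto
        have "mindist (resid_set a m n') \<le> nat \<bar>int (0 * a mod m) - int (Q * a mod m)\<bar>"
          using md_le[OF m0 x y] rQ e1p by simp
        also have "\<dots> = e1" using rQ by simp
        finally show "mindist (resid_set a m n') < eseq m a n" using e1n by simp
      qed
    qed
    then show ?thesis using False Q_def by simp
  qed
qed


lemma eseq_shift: "eseq G1 (G2 mod G1) n = eseq G2 G1 (Suc n)"
proof -
  have "eseq G1 (G2 mod G1) n = eseq G2 G1 (Suc n) \<and> eseq G1 (G2 mod G1) (Suc n) = eseq G2 G1 (Suc (Suc n))"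
  proof (induction n)
    case 0 then show ?case by simp
  next
    case (Suc n) then show ?case by simp
  qed
  then show ?thesis by simp
qed

lemma Qs_shift: "Qs G1 (G2 mod G1) (Suc (Suc n)) = Qs G1 (G2 mod G1) n
   + (eseq G2 G1 (Suc n) div eseq G2 G1 (Suc (Suc n))) * Qs G1 (G2 mod G1) (Suc n)"
  by (simp only: Qs.simps eseq_shift)

lemma nn1_NN: "nn1 G1 G2 j = NN G2 G1 (sigma G1 G2 j)"
  by (simp only: nn1_def NN_def d1_def)

lemma resid_modeq: "resid_set G2 G1 n = resid_set (G2 mod G1) G1 n"
proof -
  have "\<And>t. t * G2 mod G1 = t * (G2 mod G1) mod G1" by (rule mod_mult_right_eq[symmetric])
  then show ?thesis unfolding resid_set_def by (simp only:)
qed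

lemma nn2_NN: "nn2 G1 G2 j = NN G1 (G2 mod G1) (sigma G1 G2 j)"
  unfolding nn2_def NN_def d2_def resid_modeq[of G2 G1] by (rule refl)

lemma zero_prop: assumes "eseq m a k = 0"
  shows "eseq m a (k + 2*i) = 0 \<and> eseq m a (k + 2*i + 1) = eseq m a (k + 1)"
proof (induction i)
  case 0 then show ?case using assms by simp
next
  case (Suc i)
  have "k + 2 * Suc i = Suc (Suc (k + 2*i))" by simp
  moreover have "k + 2 * Suc i + 1 = Suc (Suc (k + 2*i + 1))" by simp
  ultimately show ?case using Suc by (simp del: eseq.simps add: eseq.simps(3))
qed

lemma all_pos: assumes "1 < eseq m a (Suc K)" "eseq m a (Suc (Suc K)) = 1" "0 < m"
  shows "\<forall>i \<le> Suc (Suc K). 0 < eseq m a i"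
proof (intro allI impI, rule ccontr)
  fix k assume k: "k \<le> Suc (Suc K)" "\<not> 0 < eseq m a k"
  then have z: "eseq m a k = 0" by simp
  have "k \<noteq> Suc K" "k \<noteq> Suc (Suc K)" using z assms by auto
  then have kK: "k \<le> K" using k by simp
  define d where "d = Suc K - k"
  show False
  proof (cases "even d")
    case True
    then obtain i where "d = 2 * i" by blast
    then have "Suc K = k + 2 * i" using d_def kK by simp
    then show False using zero_prop[OF z, of i] assms by simp
  next
    case False
    then obtain i where "d = 2 * i + 1" by (metis oddE)
    then have "Suc (Suc K) = k + 2 * (i + 1)" using d_def kK by simp
    then show False using zero_prop[OF z, of "i+1"] assms by simp
  qed
qed

theorem lemma6:
  fixes G1 G2 K :: nat
  assumes "coprime G1 G2" and "1 < G1" and "G1 < G2"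
    and "sigma G1 G2 K > 1" and "sigma G1 G2 (K + 1) = 1"
  shows "(K = 0 \<longrightarrow> nn2 G1 G2 1 = G1 - 1 \<and> nn1 G1 G2 1 = G2 - 1)
    \<and> (K \<ge> 1 \<longrightarrow>
        nn2 G1 G2 (K + 1) = G1 - 1
      \<and> nn1 G1 G2 (K + 1) = G2 - 1
      \<and> nn2 G1 G2 1 = G1 div sigma G1 G2 1
      \<and> nn1 G1 G2 1 = (G2 div G1) * (G1 div sigma G1 G2 1)
      \<and> (2 \<le> K \<longrightarrow>
           nn2 G1 G2 2 = (G1 div sigma G1 G2 1) * (sigma G1 G2 1 div sigma G1 G2 2)
         \<and> nn1 G1 G2 2 = (G2 div G1) * (G1 div sigma G1 G2 1) * (sigma G1 G2 1 div sigma G1 G2 2)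
                          + (sigma G1 G2 1 div sigma G1 G2 2) + (G2 div G1))
      \<and> (\<forall>p\<ge>1. 2 * p + 1 \<le> K \<longrightarrow>
           nn2 G1 G2 (2 * p + 1) = (sigma G1 G2 (2 * p) div sigma G1 G2 (2 * p + 1))
                                     * (nn2 G1 G2 (2 * p) + 1) + nn2 G1 G2 (2 * p - 1)
         \<and> nn1 G1 G2 (2 * p + 1) = (sigma G1 G2 (2 * p) div sigma G1 G2 (2 * p + 1))
                                     * nn1 G1 G2 (2 * p) + nn1 G1 G2 (2 * p - 1))
      \<and> (\<forall>p\<ge>1. 2 * p + 2 \<le> K \<longrightarrow>
           nn2 G1 G2 (2 * p + 2) = (sigma G1 G2 (2 * p + 1) div sigma G1 G2 (2 * p + 2))
                                     * nn2 G1 G2 (2 * p + 1) + nn2 G1 G2 (2 * p)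
         \<and> nn1 G1 G2 (2 * p + 2) = (sigma G1 G2 (2 * p + 1) div sigma G1 G2 (2 * p + 2))
                                     * (nn1 G1 G2 (2 * p + 1) + 1) + nn1 G1 G2 (2 * p)))"
proof -
  define e where "e = eseq G2 G1"
  define s1 where "s1 = G2 mod G1"
  define Q where "Q = Qs G2 G1"
  define P where "P = Qs G1 s1"
  have sg: "\<And>i. sigma G1 G2 i = e (Suc i)" unfolding sigma_def e_def by simp
  have eK: "1 < e (Suc K)" "e (Suc (Suc K)) = 1" using assms(4,5) sg by auto
  have pos: "\<forall>i \<le> Suc (Suc K). 0 < e i" using all_pos[of G2 G1 K] eK assms(3) e_def by simp
  have anti: "\<And>i j. i \<le> j \<Longrightarrow> j \<le> Suc (Suc K) \<Longrightarrow> e j \<le> e i"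
    unfolding e_def by (rule eseq_anti[OF assms(3) pos[unfolded e_def]])
  have e2: "e 2 = s1" unfolding e_def s1_def by (simp add: numeral_2_eq_2)
  have "0 < e 2" using pos by (simp add: numeral_2_eq_2)
  then have s1p: "0 < s1" using e2 by simp
  have s1G: "s1 < G1" using assms(2) s1_def by simp
  have ebig: "\<And>j. j \<le> K \<Longrightarrow> 1 < e (Suc j)"
  proof -
    fix j assume "j \<le> K"
    then have "e (Suc K) \<le> e (Suc j)" by (intro anti) auto
    then show "1 < e (Suc j)" using eK(1) by simp
  qed
  have sh: "\<And>n. eseq G1 s1 n = e (Suc n)" unfolding s1_def e_def by (rule eseq_shift)
  have F1: "\<And>j. 1 \<le> j \<Longrightarrow> j \<le> K \<Longrightarrow> nn1 G1 G2 j = (if odd (Suc j) then Q (Suc (Suc j)) else Q (Suc (Suc j)) - 1)"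
  proof -
    fix j assume j: "1 \<le> j" "j \<le> K"
    have "NN G2 G1 (eseq G2 G1 (Suc j)) = (if odd (Suc j) then Qs G2 G1 (Suc (Suc j)) else Qs G2 G1 (Suc (Suc j)) - 1)"
      using gen_main[of G1 G2 "Suc j"] assms(2,3) ebig[OF j(2)] pos j unfolding e_def by auto
    then show "nn1 G1 G2 j = (if odd (Suc j) then Q (Suc (Suc j)) else Q (Suc (Suc j)) - 1)"
      unfolding nn1_NN Q_def sigma_def by simp
  qed
  have F2: "\<And>j. 1 \<le> j \<Longrightarrow> j \<le> K \<Longrightarrow> nn2 G1 G2 j = (if odd j then P (Suc j) else P (Suc j) - 1)"
  proof -
    fix j assume j: "1 \<le> j" "j \<le> K"
    have "\<forall>i \<le> Suc j. 0 < eseq G1 s1 i" using pos j sh by auto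
    moreover have "1 < eseq G1 s1 j" using sh ebig[OF j(2)] by simp
    ultimately have "NN G1 s1 (eseq G1 s1 j) = (if odd j then P (Suc j) else P (Suc j) - 1)"
      using gen_main[of s1 G1 j] s1p s1G j unfolding P_def by auto
    then show "nn2 G1 G2 j = (if odd j then P (Suc j) else P (Suc j) - 1)"
      unfolding nn2_NN s1_def[symmetric] sg sh[symmetric] by simp
  qed
  have L1: "nn1 G1 G2 (K + 1) = G2 - 1"
    unfolding nn1_NN using gen_last[of G1 G2] assms(2,3,5) by simp
  have L2: "nn2 G1 G2 (K + 1) = G1 - 1"
    unfolding nn2_NN s1_def[symmetric] using gen_last[OF s1p s1G] assms(5) by simp
  have Qr: "\<And>n. Q (Suc (Suc n)) = Q n + (e n div e (Suc n)) * Q (Suc n)"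
    unfolding Q_def e_def by simp
  have Pr: "\<And>n. P (Suc (Suc n)) = P n + (e (Suc n) div e (Suc (Suc n))) * P (Suc n)"
    unfolding P_def s1_def e_def by (rule Qs_shift)
  have Qo: "\<And>p. 1 \<le> Q (2*p+1)" unfolding Q_def by (rule Q_odd_pos)
  have Po: "\<And>p. 1 \<le> P (2*p+1)" unfolding P_def by (rule Q_odd_pos)
  have Q0: "Q 0 = 0" "Q 1 = 1" unfolding Q_def by simp_all
  have P0: "P 0 = 0" "P 1 = 1" unfolding P_def by simp_all
  have e1: "e 1 = G1" "e 0 = G2" unfolding e_def by simp_all
  have PR: "\<And>n. P (n+2) = P n + (e (n+1) div e (n+2)) * P (n+1)"
    unfolding add_2_eq_Suc' Suc_eq_plus1[symmetric] by (rule Pr)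
  have QR: "\<And>n. Q (n+2) = Q n + (e n div e (n+1)) * Q (n+1)"
    unfolding add_2_eq_Suc' Suc_eq_plus1[symmetric] by (rule Qr)
  have sg1: "sigma G1 G2 1 = e 2" using sg[of 1] by (metis Suc_1)
  have s23: "Suc 2 = (3::nat)" by simp
  have sg2: "sigma G1 G2 2 = e 3" using sg[of 2] s23 by metis
  have part0: "K = 0 \<longrightarrow> nn2 G1 G2 1 = G1 - 1 \<and> nn1 G1 G2 1 = G2 - 1"
  proof
    assume "K = 0" then show "nn2 G1 G2 1 = G1 - 1 \<and> nn1 G1 G2 1 = G2 - 1" using L1 L2 by simp
  qed
  have partA: "K \<ge> 1 \<longrightarrow> nn2 G1 G2 1 = G1 div sigma G1 G2 1 \<and> nn1 G1 G2 1 = (G2 div G1) * (G1 div sigma G1 G2 1)"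
  proof
    assume K1: "K \<ge> 1"
    have a1: "nn2 G1 G2 1 = P 2" using F2[of 1] K1 by (simp add: eval_nat_numeral)
    have a2: "P 2 = e 1 div e 2" using PR[of 0] P0 by (simp add: eval_nat_numeral)
    have b1: "nn1 G1 G2 1 = Q 3 - 1" using F1[of 1] K1 by (simp add: eval_nat_numeral)
    have b2: "Q 2 = G2 div G1" using QR[of 0] Q0 e1 by (simp add: eval_nat_numeral)
    have b3: "Q 3 = 1 + (e 1 div e 2) * Q 2" using QR[of 1] Q0 by (simp add: eval_nat_numeral)
    show "nn2 G1 G2 1 = G1 div sigma G1 G2 1 \<and> nn1 G1 G2 1 = (G2 div G1) * (G1 div sigma G1 G2 1)"
      using a1 a2 b1 b2 b3 e1 sg1 by simp
  qed
  have partB: "2 \<le> K \<longrightarrow>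
           nn2 G1 G2 2 = (G1 div sigma G1 G2 1) * (sigma G1 G2 1 div sigma G1 G2 2)
         \<and> nn1 G1 G2 2 = (G2 div G1) * (G1 div sigma G1 G2 1) * (sigma G1 G2 1 div sigma G1 G2 2)
                          + (sigma G1 G2 1 div sigma G1 G2 2) + (G2 div G1)"
  proof
    assume K2: "2 \<le> K"
    have a1: "nn2 G1 G2 2 = P 3 - 1" using F2[of 2] K2 by simp
    have a2: "P 2 = e 1 div e 2" using PR[of 0] P0 by (simp add: eval_nat_numeral)
    have a3: "P 3 = 1 + (e 2 div e 3) * P 2" using PR[of 1] P0 by (simp add: eval_nat_numeral)
    have b1: "nn1 G1 G2 2 = Q 4" using F1[of 2] K2 by simp
    have b2: "Q 2 = G2 div G1" using QR[of 0] Q0 e1 by (simp add: eval_nat_numeral)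
    have b3: "Q 3 = 1 + (e 1 div e 2) * Q 2" using QR[of 1] Q0 by (simp add: eval_nat_numeral)
    have b4: "Q 4 = Q 2 + (e 2 div e 3) * Q 3" using QR[of 2] by (simp add: eval_nat_numeral)
    show "nn2 G1 G2 2 = (G1 div sigma G1 G2 1) * (sigma G1 G2 1 div sigma G1 G2 2)
         \<and> nn1 G1 G2 2 = (G2 div G1) * (G1 div sigma G1 G2 1) * (sigma G1 G2 1 div sigma G1 G2 2)
                          + (sigma G1 G2 1 div sigma G1 G2 2) + (G2 div G1)"
      using a1 a2 a3 b1 b2 b3 b4 e1 sg1 sg2 by (simp add: algebra_simps)
  qed
  have N2: "\<And>p::nat. 2*p+2 = Suc (Suc (2*p))" by simp
  have N3: "\<And>p::nat. 2*p+3 = Suc (Suc (Suc (2*p)))" by simp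
  have N4: "\<And>p::nat. 2*p+4 = Suc (Suc (Suc (Suc (2*p))))" by simp
  have partC: "\<forall>p\<ge>1. 2 * p + 1 \<le> K \<longrightarrow>
           nn2 G1 G2 (2 * p + 1) = (sigma G1 G2 (2 * p) div sigma G1 G2 (2 * p + 1))
                                     * (nn2 G1 G2 (2 * p) + 1) + nn2 G1 G2 (2 * p - 1)
         \<and> nn1 G1 G2 (2 * p + 1) = (sigma G1 G2 (2 * p) div sigma G1 G2 (2 * p + 1))
                                     * nn1 G1 G2 (2 * p) + nn1 G1 G2 (2 * p - 1)"
  proof (intro allI impI)
    fix p :: nat assume p1: "1 \<le> p" and pK: "2 * p + 1 \<le> K"
    have s1: "sigma G1 G2 (2 * p) = e (2*p+1)" "sigma G1 G2 (2 * p + 1) = e (2*p+2)" using sg by (simp_all add: N2 N3 N4)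
    have f1: "nn2 G1 G2 (2*p+1) = P (2*p+2)" using F2[of "2*p+1"] pK by (simp add: N2 N3 N4)
    have f2: "nn2 G1 G2 (2*p) = P (2*p+1) - 1" using F2[of "2*p"] pK p1 by (simp add: N2 N3 N4)
    have f3: "nn2 G1 G2 (2*p-1) = P (2*p)" using F2[of "2*p-1"] pK p1 by (simp add: N2 N3 N4)
    have g1: "nn1 G1 G2 (2*p+1) = Q (2*p+3) - 1" using F1[of "2*p+1"] pK by (simp add: N2 N3 N4)
    have g2: "nn1 G1 G2 (2*p) = Q (2*p+2)" using F1[of "2*p"] pK p1 by (simp add: N2 N3 N4)
    have g3: "nn1 G1 G2 (2*p-1) = Q (2*p+1) - 1" using F1[of "2*p-1"] pK p1 by (simp add: N2 N3 N4)
    have r1: "P (2*p+2) = P (2*p) + (e (2*p+1) div e (2*p+2)) * P (2*p+1)" using PR[of "2*p"] by (simp add: N2 N3 N4)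
    have r2: "Q (2*p+3) = Q (2*p+1) + (e (2*p+1) div e (2*p+2)) * Q (2*p+2)" using QR[of "2*p+1"] by (simp add: N2 N3 N4)
    have o1: "1 \<le> P (2*p+1)" "1 \<le> Q (2*p+1)" using Po Qo by auto
    show "nn2 G1 G2 (2 * p + 1) = (sigma G1 G2 (2 * p) div sigma G1 G2 (2 * p + 1))
                                     * (nn2 G1 G2 (2 * p) + 1) + nn2 G1 G2 (2 * p - 1)
         \<and> nn1 G1 G2 (2 * p + 1) = (sigma G1 G2 (2 * p) div sigma G1 G2 (2 * p + 1))
                                     * nn1 G1 G2 (2 * p) + nn1 G1 G2 (2 * p - 1)"
      unfolding s1 f1 f2 f3 g1 g2 g3 r1 r2 using o1 by (simp add: N2 N3 N4)
  qed
  have partD: "\<forall>p\<ge>1. 2 * p + 2 \<le> K \<longrightarrow>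
           nn2 G1 G2 (2 * p + 2) = (sigma G1 G2 (2 * p + 1) div sigma G1 G2 (2 * p + 2))
                                     * nn2 G1 G2 (2 * p + 1) + nn2 G1 G2 (2 * p)
         \<and> nn1 G1 G2 (2 * p + 2) = (sigma G1 G2 (2 * p + 1) div sigma G1 G2 (2 * p + 2))
                                     * (nn1 G1 G2 (2 * p + 1) + 1) + nn1 G1 G2 (2 * p)"
  proof (intro allI impI)
    fix p :: nat assume p1: "1 \<le> p" and pK: "2 * p + 2 \<le> K"
    have s1: "sigma G1 G2 (2 * p + 1) = e (2*p+2)" "sigma G1 G2 (2 * p + 2) = e (2*p+3)" using sg by (simp_all add: N2 N3 N4)
    have f1: "nn2 G1 G2 (2*p+2) = P (2*p+3) - 1" using F2[of "2*p+2"] pK by (simp add: N2 N3 N4)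
    have f2: "nn2 G1 G2 (2*p+1) = P (2*p+2)" using F2[of "2*p+1"] pK by (simp add: N2 N3 N4)
    have f3: "nn2 G1 G2 (2*p) = P (2*p+1) - 1" using F2[of "2*p"] pK p1 by (simp add: N2 N3 N4)
    have g1: "nn1 G1 G2 (2*p+2) = Q (2*p+4)" using F1[of "2*p+2"] pK by (simp add: N2 N3 N4)
    have g2: "nn1 G1 G2 (2*p+1) = Q (2*p+3) - 1" using F1[of "2*p+1"] pK by (simp add: N2 N3 N4)
    have g3: "nn1 G1 G2 (2*p) = Q (2*p+2)" using F1[of "2*p"] pK p1 by (simp add: N2 N3 N4)
    have r1: "P (2*p+3) = P (2*p+1) + (e (2*p+2) div e (2*p+3)) * P (2*p+2)" using PR[of "2*p+1"] by (simp add: N2 N3 N4)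
    have r2: "Q (2*p+4) = Q (2*p+2) + (e (2*p+2) div e (2*p+3)) * Q (2*p+3)" using QR[of "2*p+2"] by (simp add: N2 N3 N4)
    have o1: "1 \<le> P (2*p+1)" using Po by simp
    have "2*(p+1)+1 = 2*p+3" by simp
    then have o2: "1 \<le> Q (2*p+3)" using Qo[of "p+1"] by metis
    show "nn2 G1 G2 (2 * p + 2) = (sigma G1 G2 (2 * p + 1) div sigma G1 G2 (2 * p + 2))
                                     * nn2 G1 G2 (2 * p + 1) + nn2 G1 G2 (2 * p)
         \<and> nn1 G1 G2 (2 * p + 2) = (sigma G1 G2 (2 * p + 1) div sigma G1 G2 (2 * p + 2))
                                     * (nn1 G1 G2 (2 * p + 1) + 1) + nn1 G1 G2 (2 * p)"
      unfolding s1 f1 f2 f3 g1 g2 g3 r1 r2 using o1 o2 by (simp add: N2 N3 N4)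
  qed
  show ?thesis using part0 partA partB partC partD L1 L2 by simp
qed

end
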